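(* Let $k>0$ be real and let $M=\begin{bmatrix} k-1 & k-1 & k\\ 1&0&0\\ 0&1&0\end{bmatrix}$ (which is invertible). For every integer $n\ge1$, $$M^{-n}=\left(M^{-1}\right)^n=\left(M^n\right)^{-1}=\begin{bmatrix} J_{-(n-1)} & T_{-(n+1)} & kJ_{-n}\\ J_{-n} & T_{-(n+2)} & kJ_{-(n+1)}\\ J_{-(n+1)} & T_{-(n+3)} & kJ_{-(n+2)}\end{bmatrix},$$ where $T_{-m}=(k-1)J_{-(m-1)}+kJ_{-m}$ for every integer $m$.
   Context: For real $k>0$, the third-order $k$-Jacobsthal sequence $(J_n)=(J_n^{(3)}(k))$ is defined by $J_0=0$, $J_1=1$, $J_2=k-1$ and $J_{n+3}=(k-1)J_{n+2}+(k-1)J_{n+1}+kJ_n$, and extended to negative indices by the backward recurrence $J_{-n}=\frac{1-k}{k}J_{-(n-1)}+\frac{1-k}{k}J_{-(n-2)}+\frac{1}{k}J_{-(n-3)}$ for $n\ge1$. *)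

theory Defs
  imports "HOL-Analysis.Analysis"
begin

fun Jpos :: "real \<Rightarrow> nat \<Rightarrow> real" where
  "Jpos k 0 = 0"
| "Jpos k (Suc 0) = 1"
| "Jpos k (Suc (Suc 0)) = k - 1"
| "Jpos k (Suc (Suc (Suc n))) =
     (k - 1) * Jpos k (Suc (Suc n)) + (k - 1) * Jpos k (Suc n) + k * Jpos k n"

text \<open>Jneg k n = J_{-n}, via the backward recurrence (n >= 1), with J_0 = 0.\<close>
fun Jneg :: "real \<Rightarrow> nat \<Rightarrow> real" where
  "Jneg k 0 = Jpos k 0"
| "Jneg k (Suc 0) =
     (1 - k) / k * Jpos k 0 + (1 - k) / k * Jpos k 1 + 1 / k * Jpos k 2"
| "Jneg k (Suc (Suc 0)) =
     (1 - k) / k * Jneg k 1 + (1 - k) / k * Jpos k 0 + 1 / k * Jpos k 1"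
| "Jneg k (Suc (Suc (Suc n))) =
     (1 - k) / k * Jneg k (Suc (Suc n)) + (1 - k) / k * Jneg k (Suc n) + 1 / k * Jneg k n"

definition J :: "real \<Rightarrow> int \<Rightarrow> real" where
  "J k i = (if 0 \<le> i then Jpos k (nat i) else Jneg k (nat (- i)))"

definition Tneg :: "real \<Rightarrow> int \<Rightarrow> real" where
  "Tneg k m = (k - 1) * J k (- (m - 1)) + k * J k (- m)"

fun matpow :: "'a::semiring_1 ^ 'n ^ 'n \<Rightarrow> nat \<Rightarrow> 'a ^ 'n ^ 'n" where
  "matpow A 0 = mat 1"
| "matpow A (Suc n) = A ** matpow A n"

definition Mk :: "real \<Rightarrow> real ^ 3 ^ 3" where
  "Mk k = vector [vector [k - 1, k - 1, k], vector [1, 0, 0], vector [0, 1, 0]]"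

end

theory Submission
  imports Defs
begin

lemma inv_unique:
  fixes A B :: "'a::semiring_1^'n^'n"
  assumes "A ** B = mat 1" "B ** A = mat 1"
  shows "matrix_inv A = B"
proof -
  have ex: "\<exists>C. A ** C = mat 1 \<and> C ** A = mat 1" using assms by blast
  define C where "C = matrix_inv A"
  have C: "A ** C = mat 1 \<and> C ** A = mat 1"
    unfolding C_def matrix_inv_def by (rule someI_ex[OF ex])
  have "C = C ** (A ** B)" by (simp add: assms matrix_mul_rid)
  also have "\<dots> = (C ** A) ** B" by (simp add: matrix_mul_assoc)
  also have "\<dots> = B" using C by (simp add: matrix_mul_lid)
  finally show ?thesis unfolding C_def .
qed

lemma matpow_Suc':
  fixes A :: "'a::semiring_1^'n^'n"
  shows "matpow A (Suc n) = matpow A n ** A"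
  by (induction n) (simp_all add: matrix_mul_lid matrix_mul_rid matrix_mul_assoc)

lemma matpow_inv:
  fixes A B :: "'a::semiring_1^'n^'n"
  assumes "A ** B = mat 1"
  shows "matpow A n ** matpow B n = mat 1"
proof (induction n)
  case 0 then show ?case by (simp add: matrix_mul_lid)
next
  case (Suc n)
  have "matpow A (Suc n) ** matpow B (Suc n) = (matpow A n ** A) ** (B ** matpow B n)"
    using matpow_Suc'[of A n] matpow.simps(2)[of B n] by argo
  also have "\<dots> = matpow A n ** ((A ** B) ** matpow B n)"
    by (metis matrix_mul_assoc)
  also have "\<dots> = mat 1" using Suc assms by (simp add: matrix_mul_lid)
  finally show ?case .
qed

definition Minv :: "real \<Rightarrow> real^3^3" where
  "Minv k = vector [vector [0, 1, 0], vector [0, 0, 1], vector [1/k, (1-k)/k, (1-k)/k]]"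

definition R :: "real \<Rightarrow> nat \<Rightarrow> real^3^3" where
  "R k n = vector [vector [Jneg k (n-1), (k-1) * Jneg k n + k * Jneg k (n+1), k * Jneg k n],
              vector [Jneg k n, (k-1) * Jneg k (n+1) + k * Jneg k (n+2), k * Jneg k (n+1)],
              vector [Jneg k (n+1), (k-1) * Jneg k (n+2) + k * Jneg k (n+3), k * Jneg k (n+2)]]"

lemma mat_eq3: "(A::real^3^3) = B \<longleftrightarrow> (\<forall>i j. A$i$j = B$i$j)"
  by (simp add: vec_eq_iff)

lemma mat_eq3': "(A::real^3^3) = B \<longleftrightarrow> (A$1$1 = B$1$1 \<and> A$1$2 = B$1$2 \<and> A$1$3 = B$1$3 \<and>
   A$2$1 = B$2$1 \<and> A$2$2 = B$2$2 \<and> A$2$3 = B$2$3 \<and> A$3$1 = B$3$1 \<and> A$3$2 = B$3$2 \<and> A$3$3 = B$3$3)"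
  unfolding vec_eq_iff forall_3 by blast

lemma Jneg_rec: "Jneg k (m+3) = (1-k)/k * Jneg k (m+2) + (1-k)/k * Jneg k (m+1) + 1/k * Jneg k m"
  by (simp add: numeral_3_eq_3 numeral_2_eq_2)

lemma Jpos2: "Jpos k 2 = k - 1" by (simp add: numeral_2_eq_2)

lemma Jneg_small: assumes "k \<noteq> 0" shows "Jneg k 0 = 0" "Jneg k 1 = 0" "Jneg k 2 = 1/k"
  "Jneg k 3 = (1-k)/k * (1/k)" "Jneg k 4 = (1-k)/k * ((1-k)/k * (1/k)) + (1-k)/k * (1/k)"
proof -
  have a: "Jneg k 1 = 0" using Jneg.simps(2)[of k] by (simp add: Jpos2 field_simps assms)
  have b: "Jneg k 2 = 1/k" using Jneg.simps(3)[of k] a by (simp add: numeral_2_eq_2)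
  have c: "Jneg k 3 = (1-k)/k * (1/k)" using Jneg_rec[of k 0] a b by simp
  have d: "Jneg k 4 = (1-k)/k * ((1-k)/k * (1/k)) + (1-k)/k * (1/k)"
    using Jneg_rec[of k 1] a b c by simp
  show "Jneg k 0 = 0" "Jneg k 1 = 0" "Jneg k 2 = 1/k"
  "Jneg k 3 = (1-k)/k * (1/k)" "Jneg k 4 = (1-k)/k * ((1-k)/k * (1/k)) + (1-k)/k * (1/k)"
    using a b c d by simp_all
qed

lemma MM: assumes "k \<noteq> 0" shows "Mk k ** Minv k = mat 1" "Minv k ** Mk k = mat 1"
  using assms by (auto simp: mat_eq3 forall_3 matrix_matrix_mult_def sum_3 Mk_def Minv_def mat_def field_simps)

lemma R1: assumes "k \<noteq> 0" shows "Minv k = R k 1"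
proof -
  have e: "R k 1 = vector [vector [Jneg k 0, (k-1) * Jneg k 1 + k * Jneg k 2, k * Jneg k 1],
              vector [Jneg k 1, (k-1) * Jneg k 2 + k * Jneg k 3, k * Jneg k 2],
              vector [Jneg k 2, (k-1) * Jneg k 3 + k * Jneg k 4, k * Jneg k 3]]"
  proof -
    have f: "(1::nat)-1=0" "(1::nat)+1=2" "(1::nat)+2=3" "(1::nat)+3=4" by simp_all
    show ?thesis unfolding R_def by (simp only: f)
  qed
  show ?thesis unfolding e Jneg_small[OF assms] using assms
    apply (simp del: Jneg.simps add: mat_eq3 forall_3 Minv_def)
    apply (simp add: field_simps)
    done
qed

lemma Rstep_abs:
  assumes k: "k \<noteq> 0"
  and r1: "a3 = (1-k)/k * a2 + (1-k)/k * a1 + 1/k * a0"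
  and r2: "a4 = (1-k)/k * a3 + (1-k)/k * a2 + 1/k * a1"
  and r3: "a5 = (1-k)/k * a4 + (1-k)/k * a3 + 1/k * a2"
  shows "Minv k ** (vector [vector [a0, (k-1) * a1 + k * a2, k * a1],
              vector [a1, (k-1) * a2 + k * a3, k * a2],
              vector [a2, (k-1) * a3 + k * a4, k * a3]] :: real^3^3) =
         vector [vector [a1, (k-1) * a2 + k * a3, k * a2],
              vector [a2, (k-1) * a3 + k * a4, k * a3],
              vector [a3, (k-1) * a4 + k * a5, k * a4]]"
  using k
  apply (simp only: mat_eq3')
  apply (simp add: matrix_matrix_mult_def Minv_def sum_3)
  apply (simp add: r1 r2 r3 field_simps)
  done

lemma Rstep: assumes "k \<noteq> 0" "n \<ge> 1" shows "Minv k ** R k n = R k (Suc n)"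
proof -
  obtain m where m: "n = m + 1" using assms(2) by (metis le_add_diff_inverse2)
  have s: "Suc n = m + 2" using m by simp
  have f: "m+1-1 = m" "m+1+1 = m+2" "m+1+2=m+3" "m+1+3=m+4" "m+2-1=m+1" "m+2+1=m+3"
     "m+2+2=m+4" "m+2+3=m+5" by simp_all
  have r2: "Jneg k (m+4) = (1-k)/k * Jneg k (m+3) + (1-k)/k * Jneg k (m+2) + 1/k * Jneg k (m+1)"
    using Jneg_rec[of k "m+1"] by (simp only: f)
  have r3: "Jneg k (m+5) = (1-k)/k * Jneg k (m+4) + (1-k)/k * Jneg k (m+3) + 1/k * Jneg k (m+2)"
    using Jneg_rec[of k "m+2"] by (simp only: f)
  show ?thesis unfolding s unfolding m R_def f by (rule Rstep_abs[OF assms(1) Jneg_rec r2 r3])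
qed

lemma R_pow: assumes "k \<noteq> 0" "n \<ge> 1" shows "matpow (Minv k) n = R k n"
  using assms(2)
proof (induction n rule: dec_induct)
  case base then show ?case using R1[OF assms(1)] by (simp add: matrix_mul_rid)
next
  case (step n) then show ?case using Rstep[OF assms(1) step(1)] by simp
qed

theorem mainTheorem8:
  fixes k :: real and n :: nat
  assumes "k > 0" and "n \<ge> 1"
  shows "invertible (Mk k) \<and>
    matpow (matrix_inv (Mk k)) n =
      vector [vector [J k (- (int n - 1)), Tneg k (int n + 1), k * J k (- int n)],
              vector [J k (- int n), Tneg k (int n + 2), k * J k (- (int n + 1))],
              vector [J k (- (int n + 1)), Tneg k (int n + 3), k * J k (- (int n + 2))]] \<and>
    matrix_inv (matpow (Mk k) n) =
      vector [vector [J k (- (int n - 1)), Tneg k (int n + 1), k * J k (- int n)],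
              vector [J k (- int n), Tneg k (int n + 2), k * J k (- (int n + 1))],
              vector [J k (- (int n + 1)), Tneg k (int n + 3), k * J k (- (int n + 2))]]"
proof -
  have k0: "k \<noteq> 0" using assms by simp
  have Jn: "J k (- int m) = Jneg k m" for m
    by (cases "m = 0") (auto simp: J_def)
  have a0: "J k (- (int n - 1)) = Jneg k (n-1)" using Jn[of "n-1"] assms(2) by (simp add: of_nat_diff)
  have a1: "J k (- int n) = Jneg k n" by (rule Jn)
  have a2: "J k (- (int n + 1)) = Jneg k (n+1)" using Jn[of "n+1"] by (simp add: algebra_simps)
  have a3: "J k (- (int n + 2)) = Jneg k (n+2)" using Jn[of "n+2"] by (simp add: algebra_simps)
  have a4: "J k (- (int n + 3)) = Jneg k (n+3)" using Jn[of "n+3"] by (simp add: algebra_simps)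
  have t1: "Tneg k (int n + 1) = (k-1) * Jneg k n + k * Jneg k (n+1)"
  proof -
    have "- (int n + 1 - 1) = - int n" by simp
    then show ?thesis unfolding Tneg_def using a1 a2 by simp
  qed
  have t2: "Tneg k (int n + 2) = (k-1) * Jneg k (n+1) + k * Jneg k (n+2)"
    unfolding Tneg_def using a2 a3 by (simp add: algebra_simps)
  have t3: "Tneg k (int n + 3) = (k-1) * Jneg k (n+2) + k * Jneg k (n+3)"
    unfolding Tneg_def using a3 a4 by (simp add: algebra_simps)
  have V: "vector [vector [J k (- (int n - 1)), Tneg k (int n + 1), k * J k (- int n)],
              vector [J k (- int n), Tneg k (int n + 2), k * J k (- (int n + 1))],
              vector [J k (- (int n + 1)), Tneg k (int n + 3), k * J k (- (int n + 2))]] = R k n"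
    unfolding R_def a0 a1 a2 a3 t1 t2 t3 ..
  have inv: "matrix_inv (Mk k) = Minv k" by (rule inv_unique[OF MM[OF k0]])
  have "matpow (Mk k) n ** matpow (Minv k) n = mat 1" by (rule matpow_inv[OF MM(1)[OF k0]])
  moreover have "matpow (Minv k) n ** matpow (Mk k) n = mat 1" by (rule matpow_inv[OF MM(2)[OF k0]])
  ultimately have inv2: "matrix_inv (matpow (Mk k) n) = matpow (Minv k) n" by (rule inv_unique)
  have "invertible (Mk k)" unfolding invertible_def using MM[OF k0] by blast
  then show ?thesis unfolding V inv inv2 using R_pow[OF k0 assms(2)] by simp
qed

end
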